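(* Let $f(z)=\sum_{j\ge0}\binom{2j}{j}\left(\sum_{k=0}^{2j}(-1)^k\binom{2j}{k}^4\right)z^j\in1+z\mathbb{Z}[[z]]$. Then there is a finite set $\mathcal{J}$ of primes such that $f\in\mathcal{L}(\mathcal{P}\setminus\mathcal{J})$, where $\mathcal{P}$ is the set of all primes. (In the course of this, for every prime $p\neq2$ one has $\Lambda_p(f_{|p})=f_{|p}$.)
   Context: For a prime $p$, $\mathbb{Z}_{(p)}$ is the localization of $\mathbb{Z}$ at $(p)$; for $f=\sum a(n)z^n\in\mathbb{Z}_{(p)}[[z]]$, $f_{|p}(z)=\sum (a(n)\bmod p)z^n$; $\Lambda_p(\sum a(n)z^n)=\sum a(np)z^n$. The height of a rational function $P/Q$ with $P,Q$ coprime polynomials is $\max(\deg P,\deg Q)$. For an infinite set $\mathcal{S}$ of primes, $\mathcal{L}(\mathcal{S})$ is the set of $f\in 1+z\mathbb{Q}[[z]]$ such that there is a constant $C>0$ independent of $p$ with: for every $p\in\mathcal{S}$, $f\in\mathbb{Z}_{(p)}[[z]]$, and there exist an integer $l_p>0$ and $A_p\in\mathbb{F}_p(z)\cap\mathbb{F}_p[[z]]$ with $f_{|p}(z)=A_p(z)f_{|p}(z^{p^{l_p}})$ and height of $A_p$ at most $Cp^{l_p}$. *)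

theory Defs
  imports "HOL-Computational_Algebra.Computational_Algebra" "HOL-Number_Theory.Number_Theory"
begin

text \<open>Membership of a rational number in the localization Z_(p).\<close>
definition in_Zloc :: "nat \<Rightarrow> rat \<Rightarrow> bool" where
  "in_Zloc p q \<longleftrightarrow> coprime (snd (quotient_of q)) (int p)"

text \<open>For q in Z_(p) and an integer a: the residue of q mod p equals a mod p,
  i.e. q - a lies in p Z_(p).\<close>
definition red_eq :: "nat \<Rightarrow> rat \<Rightarrow> int \<Rightarrow> bool" where
  "red_eq p q a \<longleftrightarrow> in_Zloc p q \<and> in_Zloc p ((q - of_int a) / of_int (int p))"

text \<open>Power series over F_p are represented by integer power series, compared coefficientwise mod p.\<close>
definition fps_cong :: "nat \<Rightarrow> int fps \<Rightarrow> int fps \<Rightarrow> bool" where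
  "fps_cong p F G \<longleftrightarrow> (\<forall>n. [fps_nth F n = fps_nth G n] (mod int p))"

text \<open>g is a lift of the reduction f_{|p} of the rational power series f.\<close>
definition is_red_mod :: "nat \<Rightarrow> rat fps \<Rightarrow> int fps \<Rightarrow> bool" where
  "is_red_mod p f g \<longleftrightarrow> (\<forall>n. red_eq p (fps_nth f n) (fps_nth g n))"

definition fps_subst_pow :: "nat \<Rightarrow> 'a::zero fps \<Rightarrow> 'a fps" where
  "fps_subst_pow m g = Abs_fps (\<lambda>n. if m dvd n then fps_nth g (n div m) else 0)"

definition fps_Lambda :: "nat \<Rightarrow> 'a fps \<Rightarrow> 'a fps" where
  "fps_Lambda p g = Abs_fps (\<lambda>n. fps_nth g (n * p))"

text \<open>A (an element of F_p[[z]], represented by an integer power series) lies in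
  F_p(z) \<inter> F_p[[z]] and has height at most H: A = P/Q with P, Q in F_p[z], Q \<noteq> 0
  and max(deg P, deg Q) \<le> H. (The height of the reduced fraction is the minimum of
  max(deg P, deg Q) over all such representations.)\<close>
definition ratfun_height_le :: "nat \<Rightarrow> int fps \<Rightarrow> real \<Rightarrow> bool" where
  "ratfun_height_le p A H \<longleftrightarrow>
     (\<exists>P Q :: int poly. (\<exists>i. \<not> int p dvd Polynomial.coeff Q i) \<and>
        real (Polynomial.degree P) \<le> H \<and> real (Polynomial.degree Q) \<le> H \<and>
        fps_cong p (fps_of_poly Q * A) (fps_of_poly P))"

definition Lclass :: "nat set \<Rightarrow> rat fps set" where
  "Lclass S = {f. fps_nth f 0 = 1 \<and>
     (\<exists>C::real. C > 0 \<and> (\<forall>p\<in>S. (\<forall>n. in_Zloc p (fps_nth f n)) \<and>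
        (\<exists>l::nat. l > 0 \<and> (\<exists>A g. is_red_mod p f g \<and> ratfun_height_le p A (C * real p ^ l) \<and>
            fps_cong p g (A * fps_subst_pow (p ^ l) g)))))}"

definition a19 :: "nat \<Rightarrow> int" where
  "a19 j = int ((2*j) choose j) * (\<Sum>k=0..2*j. (-1)^k * int ((2*j) choose k) ^ 4)"

definition f19 :: "rat fps" where
  "f19 = Abs_fps (\<lambda>j. of_int (a19 j))"

end

theory Submission
  imports Defs
begin


lemma choose_step_cong:
  fixes p m k :: nat
  assumes p: "prime p"
  shows "[(p + m) choose k = (m choose k) + (if p \<le> k then m choose (k - p) else 0)] (mod p)"
proof -
  have "(p + m) choose k = (\<Sum>j\<le>k. (p choose j) * (m choose (k - j)))"
    using vandermonde[of p m k] by simp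
  also have "[(\<Sum>j\<le>k. (p choose j) * (m choose (k - j))) = (\<Sum>j\<le>k. (if j = 0 then m choose k else 0) + (if j = p then m choose (k - p) else 0))] (mod p)"
  proof (rule cong_sum)
    fix j assume j: "j \<in> {..k}"
    have p0: "p \<noteq> 0" using p by auto
    show "[(p choose j) * (m choose (k - j)) = (if j = 0 then m choose k else 0) + (if j = p then m choose (k - p) else 0)] (mod p)"
    proof (cases "j = 0")
      case True then show ?thesis using p0 by simp
    next
      case False
      show ?thesis
      proof (cases "j = p")
        case True then show ?thesis using False by simp
      next
        case jp: False
        show ?thesis
        proof (cases "j < p")
          case True
          have "p dvd (p choose j)" using dvd_choose_prime[OF True False p0 p] .
          then show ?thesis using False jp by (simp add: cong_0_iff)
        next
          case ff: False
          have eq: "p choose j = 0" using jp ff by simp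
          show ?thesis using False jp by (simp add: eq del: binomial_eq_0_iff)
        qed
      qed
    qed
  qed
  also have "(\<Sum>j\<le>k. (if j = 0 then m choose k else 0) + (if j = p then m choose (k - p) else 0))
     = (m choose k) + (if p \<le> k then m choose (k - p) else 0)"
    by (simp add: sum.distrib)
  finally show ?thesis .
qed

lemma lucas:
  fixes p a b c d :: nat
  assumes p: "prime p" and b: "b < p" and d: "d < p"
  shows "[(a*p+b) choose (c*p+d) = (a choose c) * (b choose d)] (mod p)"
  using b d
proof (induction a arbitrary: c)
  case 0
  then show ?case
  proof (cases c)
    case 0 then show ?thesis by simp
  next
    case (Suc c')
    then have "b < c*p + d" using 0 by (simp add: trans_less_add1)
    then have eq: "b choose (c*p+d) = 0" by simp
    have z: "0 choose c = 0" using Suc by simp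
    show ?thesis by (simp only: mult_zero_left add_0 eq z cong_refl)
  qed
next
  case (Suc a)
  have eq: "Suc a * p + b = p + (a*p+b)" by simp
  have "[(Suc a * p + b) choose (c*p+d) = ((a*p+b) choose (c*p+d)) + (if p \<le> c*p+d then (a*p+b) choose (c*p+d-p) else 0)] (mod p)"
    unfolding eq by (rule choose_step_cong[OF p])
  also have "[((a*p+b) choose (c*p+d)) + (if p \<le> c*p+d then (a*p+b) choose (c*p+d-p) else 0) = (a choose c)*(b choose d) + (if 0 < c then (a choose (c - 1)) * (b choose d) else 0)] (mod p)"
  proof (cases c)
    case 0
    have h: "[(a*p+b) choose (0*p+d) = (a choose 0)*(b choose d)] (mod p)"
      using Suc.IH[OF Suc.prems, of 0] .
    have i1: "(if p \<le> c*p+d then (a*p+b) choose (c*p+d-p) else 0) = 0" using 0 Suc.prems by simp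
    have i2: "(if 0 < c then (a choose (c - 1)) * (b choose d) else 0) = 0" using 0 by simp
    show ?thesis unfolding i1 i2 add_0_right using h unfolding 0 by simp
  next
    case (Suc c')
    have e1: "c*p + d - p = c'*p + d" using Suc by simp
    have pl: "p \<le> c*p+d" using Suc by simp
    have h1: "[(a*p+b) choose (c*p+d) = (a choose c)*(b choose d)] (mod p)"
      by (rule Suc.IH) (use Suc.prems in auto)
    have h2: "[(a*p+b) choose (c'*p+d) = (a choose c')*(b choose d)] (mod p)"
      by (rule Suc.IH) (use Suc.prems in auto)
    show ?thesis unfolding e1 using pl h1 h2 Suc by (simp add: cong_add)
  qed
  also have "(a choose c)*(b choose d) + (if 0 < c then (a choose (c - 1)) * (b choose d) else 0) = (Suc a choose c) * (b choose d)"
    by (cases c) (simp_all add: algebra_simps)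
  finally show ?case .
qed


definition B19 :: "nat \<Rightarrow> int" where
  "B19 m = (\<Sum>k=0..m. (-1)^k * int (m choose k) ^ 4)"

lemma a19_B: "a19 j = int ((2*j) choose j) * B19 (2*j)"
  unfolding a19_def B19_def by simp

lemma sum_split_blocks:
  fixes f :: "nat \<Rightarrow> 'a::comm_monoid_add"
  shows "(\<Sum>k<m*p. f k) = (\<Sum>i<m. \<Sum>j<p. f (i*p+j))"
proof (induction m)
  case 0 then show ?case by simp
next
  case (Suc m)
  have u: "{..<Suc m * p} = {..<m*p} \<union> {m*p..<m*p+p}" by auto
  have "(\<Sum>k<Suc m*p. f k) = (\<Sum>k<m*p. f k) + (\<Sum>k\<in>{m*p..<m*p+p}. f k)"
    unfolding u by (rule sum.union_disjoint) auto
  also have "(\<Sum>k\<in>{m*p..<m*p+p}. f k) = (\<Sum>j<p. f (m*p+j))"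
    using sum.shift_bounds_nat_ivl[of f 0 "m*p" p] by (simp add: atLeast0LessThan add.commute)
  finally show ?case using Suc by simp
qed

lemma neg1_pow_odd: "odd (p::nat) \<Longrightarrow> (-1::int)^(i*p+j) = (-1)^i * (-1)^j"
  by (simp add: minus_one_power_iff power_add)

lemma B19_mult:
  assumes p: "prime p" and odd: "odd p" and s: "s < p"
  shows "[B19 (M*p+s) = B19 M * B19 s] (mod int p)"
proof -
  define t where "t k = (-1::int)^k * int ((M*p+s) choose k) ^ 4" for k
  have "B19 (M*p+s) = (\<Sum>k<Suc M*p. t k)"
    unfolding B19_def t_def
    by (rule sum.mono_neutral_left) (use s in auto)
  also have "\<dots> = (\<Sum>i<Suc M. \<Sum>j<p. t (i*p+j))" by (rule sum_split_blocks)
  finally have e: "B19 (M*p+s) = (\<Sum>i<Suc M. \<Sum>j<p. t (i*p+j))" .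
  have c: "[(\<Sum>i<Suc M. \<Sum>j<p. t (i*p+j)) =
     (\<Sum>i<Suc M. \<Sum>j<p. ((-1)^i * int (M choose i)^4) * ((-1)^j * int (s choose j)^4))] (mod int p)"
  proof (intro cong_sum)
    fix i j assume j: "j \<in> {..<p}"
    have l: "[(M*p+s) choose (i*p+j) = (M choose i) * (s choose j)] (mod p)"
      using lucas[OF p s] j by simp
    then have "[int ((M*p+s) choose (i*p+j)) = int ((M choose i) * (s choose j))] (mod int p)"
      unfolding cong_int_iff .
    then have l': "[int ((M*p+s) choose (i*p+j)) = int (M choose i) * int (s choose j)] (mod int p)"
      by simp
    have "[t (i*p+j) = (-1)^i * (-1)^j * (int (M choose i) * int (s choose j))^4] (mod int p)"
      unfolding t_def neg1_pow_odd[OF odd]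
      by (intro cong_mult cong_pow l' cong_refl)
    then show "[t (i*p+j) = ((-1)^i * int (M choose i)^4) * ((-1)^j * int (s choose j)^4)] (mod int p)"
      by (simp add: algebra_simps power_mult_distrib)
  qed
  have "(\<Sum>i<Suc M. \<Sum>j<p. ((-1::int)^i * int (M choose i)^4) * ((-1)^j * int (s choose j)^4))
      = (\<Sum>i<Suc M. (-1::int)^i * int (M choose i)^4) * (\<Sum>j<p. (-1)^j * int (s choose j)^4)"
    by (simp only: sum_product)
  also have "(\<Sum>i<Suc M. (-1::int)^i * int (M choose i)^4) = B19 M"
    unfolding B19_def by (rule sum.cong) auto
  also have "(\<Sum>j<p. (-1::int)^j * int (s choose j)^4) = B19 s"
    unfolding B19_def
    by (rule sum.mono_neutral_right) (use s in auto)
  finally show ?thesis using e c by simp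
qed

lemma a19_lucas:
  assumes p: "prime p" and odd: "odd p" and r: "r < p"
  shows "[a19 (n*p+r) = a19 n * a19 r] (mod int p)"
proof (cases "2*r < p")
  case True
  have l: "[(2*n*p + 2*r) choose (n*p+r) = ((2*n) choose n) * ((2*r) choose r)] (mod p)"
    using lucas[OF p True r] by simp
  have e: "2*(n*p+r) = 2*n*p + 2*r" by (simp add: algebra_simps)
  have "[int ((2*(n*p+r)) choose (n*p+r)) = int (((2*n) choose n) * ((2*r) choose r))] (mod int p)"
    using l unfolding e cong_int_iff .
  then have l': "[int ((2*(n*p+r)) choose (n*p+r)) = int ((2*n) choose n) * int ((2*r) choose r)] (mod int p)"
    by simp
  have b: "[B19 (2*(n*p+r)) = B19 (2*n) * B19 (2*r)] (mod int p)"
    using B19_mult[OF p odd True, of "2*n"] unfolding e .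
  have "[a19 (n*p+r) = (int ((2*n) choose n) * int ((2*r) choose r)) * (B19 (2*n) * B19 (2*r))] (mod int p)"
    unfolding a19_B by (intro cong_mult l' b)
  then show ?thesis unfolding a19_B by (simp only: ac_simps)
next
  case False
  have r1: "2*r - p < p" "r < p" using r by auto
  have "2*r - p < r" using r False by linarith
  then have z: "(2*r - p) choose r = 0" by simp
  have l1: "[(Suc (2*n)*p + (2*r-p)) choose (n*p+r) = (Suc (2*n) choose n) * ((2*r-p) choose r)] (mod p)"
    using lucas[OF p r1] .
  have e1: "Suc (2*n)*p + (2*r-p) = 2*(n*p+r)" using False by (simp add: algebra_simps)
  have d1: "p dvd ((2*(n*p+r)) choose (n*p+r))"
    using l1 unfolding e1 z by (simp add: cong_0_iff)
  have l2: "[(1*p + (2*r-p)) choose (0*p+r) = (1 choose 0) * ((2*r-p) choose r)] (mod p)"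
    using lucas[OF p r1] .
  have e2: "1*p + (2*r-p) = 2*r" using False by simp
  have d2: "p dvd ((2*r) choose r)"
    using l2 unfolding e2 z by (simp add: cong_0_iff)
  have d1': "int p dvd int ((2*(n*p+r)) choose (n*p+r))" using d1 by (simp only: int_dvd_int_iff)
  have d2': "int p dvd int ((2*r) choose r)" using d2 by (simp only: int_dvd_int_iff)
  have x: "int p dvd a19 (n*p+r)" unfolding a19_B using d1' by (rule dvd_mult2)
  have "int p dvd a19 r" unfolding a19_B using d2' by (rule dvd_mult2)
  then have y: "int p dvd a19 n * a19 r" by (rule dvd_mult)
  show ?thesis unfolding cong_iff_dvd_diff using x y by (rule dvd_diff)
qed



lemma in_Zloc_int: "in_Zloc p (of_int m)"
  unfolding in_Zloc_def by (simp add: quotient_of_int)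

lemma red_eq_refl: "red_eq p (of_int m) m"
  unfolding red_eq_def using in_Zloc_int[of p m] in_Zloc_int[of p 0] by simp

lemma red_eq_cong:
  assumes p: "prime p" and h: "red_eq p (of_int m) a"
  shows "[a = m] (mod int p)"
proof -
  obtain n d where q: "quotient_of ((of_int m - of_int a) / of_int (int p)) = (n, d)"
    by (cases "quotient_of ((of_int m - of_int a) / of_int (int p) :: rat)") auto
  have cop: "coprime d (int p)" using h q unfolding red_eq_def in_Zloc_def by simp
  have d0: "d > 0" using quotient_of_denom_pos[OF q] .
  have p0: "(of_int (int p) :: rat) \<noteq> 0" using p by (simp add: prime_gt_0_nat)
  have "(of_int m - of_int a) / of_int (int p) = (of_int n / of_int d :: rat)"
    using quotient_of_div[OF q] .
  then have "(of_int (m - a) :: rat) * of_int d = of_int n * of_int (int p)"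
    using p0 d0 by (simp add: field_simps)
  then have "(m - a) * d = n * int p"
    by (metis of_int_eq_iff of_int_mult)
  then have "int p dvd (m - a) * d" by simp
  then have "int p dvd (m - a)"
    using cop by (metis coprime_commute coprime_dvd_mult_left_iff)
  then have "int p dvd (a - m)" by (metis dvd_minus_iff minus_diff_eq)
  then show ?thesis by (simp add: cong_iff_dvd_diff)
qed

lemma a19_0: "a19 0 = 1" by (simp add: a19_def)

lemma f19_nth: "fps_nth f19 n = of_int (a19 n)" by (simp add: f19_def)

lemma key_sum:
  assumes p: "prime p"
  defines "P \<equiv> Poly (map a19 [0..<p])"
  shows "(fps_of_poly P * fps_subst_pow p (Abs_fps a19)) $ n = a19 (n mod p) * a19 (n div p)"
proof -
  have p0: "p > 0" using p by (simp add: prime_gt_0_nat)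
  have "(fps_of_poly P * fps_subst_pow p (Abs_fps a19)) $ n =
     (\<Sum>i=0..n. Polynomial.coeff P i * (if p dvd (n - i) then a19 ((n - i) div p) else 0))"
    by (simp add: fps_mult_nth fps_subst_pow_def cong: if_cong)
  also have "\<dots> = (\<Sum>i=0..n. if i = n mod p then a19 (n mod p) * a19 (n div p) else 0)"
  proof (rule sum.cong)
    fix i assume i: "i \<in> {0..n}"
    show "Polynomial.coeff P i * (if p dvd (n - i) then a19 ((n - i) div p) else 0) =
          (if i = n mod p then a19 (n mod p) * a19 (n div p) else 0)"
    proof (cases "i = n mod p")
      case True
      have ip: "i < p" using True p0 by simp
      have cP: "Polynomial.coeff P i = a19 i" using ip unfolding P_def by (simp add: nth_default_def)
      have "n - i = (n div p) * p" using True by (metis minus_mod_eq_div_mult)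
      then show ?thesis using True cP p0 by simp
    next
      case False
      show ?thesis
      proof (cases "i < p")
        case True
        have "\<not> p dvd (n - i)"
        proof
          assume "p dvd (n - i)"
          then have "n mod p = i mod p" using i mod_eq_dvd_iff_nat[of i n p] by simp
          then show False using False True by simp
        qed
        then show ?thesis using False by simp
      next
        case ff: False
        have "Polynomial.coeff P i = 0" using ff unfolding P_def by (simp add: nth_default_def)
        then show ?thesis using False by simp
      qed
    qed
  qed simp
  also have "\<dots> = a19 (n mod p) * a19 (n div p)"
    by (simp add: sum.delta)
  finally show ?thesis .
qed

theorem mainTheorem19:
  shows "(\<exists>J::nat set. finite J \<and> (\<forall>p\<in>J. prime p) \<and> f19 \<in> Lclass ({p. prime p} - J)) \<and>
         (\<forall>p::nat. prime p \<longrightarrow> p \<noteq> 2 \<longrightarrow>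
            (\<forall>g. is_red_mod p f19 g \<longrightarrow> fps_cong p (fps_Lambda p g) g))"
proof (intro conjI allI impI)
  fix p :: nat and g
  assume p: "prime p" and p2: "p \<noteq> 2" and g: "is_red_mod p f19 g"
  have odd: "odd p" using prime_odd_nat[OF p] prime_ge_2_nat[OF p] p2 by simp
  have gc: "[fps_nth g n = a19 n] (mod int p)" for n
  proof -
    have "red_eq p (of_int (a19 n)) (fps_nth g n)"
      using g unfolding is_red_mod_def f19_nth by (rule spec)
    then show ?thesis by (rule red_eq_cong[OF p])
  qed
  show "fps_cong p (fps_Lambda p g) g"
    unfolding fps_cong_def
  proof
    fix n
    have p0: "0 < p" using p by (simp add: prime_gt_0_nat)
    have "[a19 (n*p+0) = a19 n * a19 0] (mod int p)" using a19_lucas[OF p odd p0] .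
    then have L: "[a19 (n*p) = a19 n] (mod int p)" by (simp add: a19_0)
    show "[fps_Lambda p g $ n = g $ n] (mod int p)"
    proof -
      have "[fps_Lambda p g $ n = a19 (n*p)] (mod int p)"
        unfolding fps_Lambda_def using gc[of "n*p"] by simp
      also have "[a19 (n*p) = a19 n] (mod int p)" by (rule L)
      also have "[a19 n = g $ n] (mod int p)" using gc[of n] by (rule cong_sym)
      finally show ?thesis .
    qed
  qed
next
  show "\<exists>J::nat set. finite J \<and> (\<forall>p\<in>J. prime p) \<and> f19 \<in> Lclass ({p. prime p} - J)"
  proof (intro exI conjI)
    show "finite {2::nat}" by simp
    show "\<forall>p\<in>{2::nat}. prime p" by simp
    show "f19 \<in> Lclass ({p. prime p} - {2})"
      unfolding Lclass_def
    proof (rule CollectI, rule conjI)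
      show "fps_nth f19 0 = 1" by (simp add: f19_nth a19_0)
    next
     show "\<exists>C::real. C > 0 \<and> (\<forall>p\<in>{p. prime p} - {2}. (\<forall>n. in_Zloc p (fps_nth f19 n)) \<and>
        (\<exists>l::nat. l > 0 \<and> (\<exists>A g. is_red_mod p f19 g \<and> ratfun_height_le p A (C * real p ^ l) \<and>
            fps_cong p g (A * fps_subst_pow (p ^ l) g))))"
     proof (rule exI[of _ 1], rule conjI)
      show "(0::real) < 1" by simp
     next
      show "\<forall>p\<in>{p. prime p} - {2}. (\<forall>n. in_Zloc p (fps_nth f19 n)) \<and>
        (\<exists>l::nat. l > 0 \<and> (\<exists>A g. is_red_mod p f19 g \<and> ratfun_height_le p A (1 * real p ^ l) \<and>
            fps_cong p g (A * fps_subst_pow (p ^ l) g)))"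
      proof (rule ballI, rule conjI)
      fix p :: nat assume pJ: "p \<in> {p. prime p} - {2}"
      have p: "prime p" and p2: "p \<noteq> 2" using pJ by auto
      have odd: "odd p" using prime_odd_nat[OF p] prime_ge_2_nat[OF p] p2 by simp
      have p0: "0 < p" using p by (simp add: prime_gt_0_nat)
      show "\<forall>n. in_Zloc p (fps_nth f19 n)" by (simp add: f19_nth in_Zloc_int)
      next
      fix p :: nat assume pJ: "p \<in> {p. prime p} - {2}"
      have p: "prime p" and p2: "p \<noteq> 2" using pJ by auto
      have odd: "odd p" using prime_odd_nat[OF p] prime_ge_2_nat[OF p] p2 by simp
      have p0: "0 < p" using p by (simp add: prime_gt_0_nat)
      define P where "P = Poly (map a19 [0..<p])"
      show "\<exists>l>0. \<exists>A g. is_red_mod p f19 g \<and> ratfun_height_le p A (1 * real p ^ l) \<and>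
             fps_cong p g (A * fps_subst_pow (p ^ l) g)"
      proof (intro exI conjI)
        show "(0::nat) < 1" by simp
        show "is_red_mod p f19 (Abs_fps a19)"
          unfolding is_red_mod_def f19_nth by (simp add: red_eq_refl)
        show "ratfun_height_le p (fps_of_poly P) (1 * real p ^ 1)"
          unfolding ratfun_height_le_def
        proof (intro exI conjI)
          show "\<not> int p dvd Polynomial.coeff 1 0" using p using prime_gt_1_nat[OF p] by simp
          show "real (degree P) \<le> 1 * real p ^ 1"
            using degree_Poly[of "map a19 [0..<p]"] unfolding P_def by simp
          show "real (degree (1::int poly)) \<le> 1 * real p ^ 1" by simp
          show "fps_cong p (fps_of_poly 1 * fps_of_poly P) (fps_of_poly P)"
            by (simp add: fps_cong_def)
        qed
        show "fps_cong p (Abs_fps a19) (fps_of_poly P * fps_subst_pow (p ^ 1) (Abs_fps a19))"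
          unfolding fps_cong_def
        proof
          fix n
          have "[a19 ((n div p)*p + n mod p) = a19 (n div p) * a19 (n mod p)] (mod int p)"
            by (rule a19_lucas[OF p odd]) (simp add: p0)
          moreover have "(fps_of_poly P * fps_subst_pow (p ^ 1) (Abs_fps a19)) $ n = a19 (n mod p) * a19 (n div p)"
            using key_sum[OF p, of n] unfolding P_def power_one_right .
          moreover have "(n div p)*p + n mod p = n" by simp
          ultimately show "[Abs_fps a19 $ n = (fps_of_poly P * fps_subst_pow (p ^ 1) (Abs_fps a19)) $ n] (mod int p)"
            by (simp only: fps_nth_Abs_fps mult.commute)
        qed
      qed
     qed
    qed
    qed
  qed
qed


end
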